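(* Let $A,B,C$ be real $k\times m$ matrices with $A=B+C$, let $r$ be a positive integer with $2r\le\min(k,m)$, and let $A=\sum_i\sigma_i(A)u_iv_i^{\intercal}$ be a singular value decomposition of $A$ (singular values non-increasing, $\{u_i\}$ and $\{v_i\}$ orthonormal). Let $\beta\ge0$ be such that $\sigma_{r+1}(B)\le\beta$ and $\|Cv_i\|\le2\beta$ for all $i\in[2r]$. Then $\sigma_{2r}(A)\le4\beta$.
   Context: $\sigma_i(\cdot)$ is the $i$-th largest singular value and $\|\cdot\|$ the Euclidean norm of a vector. *)

theory Defs
  imports "HOL-Analysis.Analysis"
begin

text \<open>Real k x m matrices are rendered as real^'m^'k (k rows, m columns).
  Singular values and singular vectors are indexed by 1..min(k,m).\<close>

definition outer_prod :: "real^'k \<Rightarrow> real^'m \<Rightarrow> real^'m^'k" where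
  "outer_prod x y = (\<chi> a b. x $ a * y $ b)"

definition is_svd :: "real^'m^'k \<Rightarrow> (nat \<Rightarrow> real) \<Rightarrow> (nat \<Rightarrow> real^'k) \<Rightarrow> (nat \<Rightarrow> real^'m) \<Rightarrow> bool" where
  "is_svd A s u v \<longleftrightarrow>
     (let p = min CARD('k) CARD('m) in
       (\<forall>i. (i < 1 \<or> p < i) \<longrightarrow> s i = 0) \<and>
       (\<forall>i\<in>{1..p}. 0 \<le> s i) \<and>
       (\<forall>i j. 1 \<le> i \<longrightarrow> i \<le> j \<longrightarrow> j \<le> p \<longrightarrow> s j \<le> s i) \<and>
       (\<forall>i\<in>{1..p}. \<forall>j\<in>{1..p}. u i \<bullet> u j = (if i = j then 1 else 0)) \<and>
       (\<forall>i\<in>{1..p}. \<forall>j\<in>{1..p}. v i \<bullet> v j = (if i = j then 1 else 0)) \<and>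
       A = (\<Sum>i=1..p. s i *\<^sub>R outer_prod (u i) (v i)))"

text \<open>sigma A i: the i-th largest singular value of A (the coefficient sequence of an SVD,
  which is uniquely determined by A).\<close>
definition sigma :: "real^'m^'k \<Rightarrow> nat \<Rightarrow> real" where
  "sigma A = (SOME s. \<exists>u v. is_svd A s u v)"

end

theory Submission imports Defs begin


definition onf :: "(nat \<Rightarrow> 'a::real_inner) \<Rightarrow> nat set \<Rightarrow> bool" where
  "onf v I \<longleftrightarrow> (\<forall>i\<in>I. \<forall>j\<in>I. v i \<bullet> v j = (if i = j then 1 else 0))"

lemma onf_inner_sum:
  assumes "onf v I" "finite I" "j \<in> I"
  shows "v j \<bullet> (\<Sum>i\<in>I. c i *\<^sub>R v i) = c j"
proof -
  have "v j \<bullet> (\<Sum>i\<in>I. c i *\<^sub>R v i) = (\<Sum>i\<in>I. c i * (v j \<bullet> v i))"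
    by (simp add: inner_sum_right)
  also have "\<dots> = (\<Sum>i\<in>I. if i = j then c i else 0)"
    using assms by (intro sum.cong) (auto simp: onf_def)
  also have "\<dots> = c j" using assms by simp
  finally show ?thesis .
qed

lemma onf_sum_inner_sum:
  assumes "onf v I" "finite I"
  shows "(\<Sum>i\<in>I. c i *\<^sub>R v i) \<bullet> (\<Sum>i\<in>I. d i *\<^sub>R v i) = (\<Sum>i\<in>I. c i * d i)"
proof -
  have "(\<Sum>i\<in>I. c i *\<^sub>R v i) \<bullet> (\<Sum>i\<in>I. d i *\<^sub>R v i) = (\<Sum>j\<in>I. c j * (v j \<bullet> (\<Sum>i\<in>I. d i *\<^sub>R v i)))"
    by (simp add: inner_sum_left)
  also have "\<dots> = (\<Sum>j\<in>I. c j * d j)"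
    using assms by (intro sum.cong) (auto simp: onf_inner_sum)
  finally show ?thesis .
qed

lemma onf_norm_sum:
  assumes "onf v I" "finite I"
  shows "(norm (\<Sum>i\<in>I. c i *\<^sub>R v i))\<^sup>2 = (\<Sum>i\<in>I. (c i)\<^sup>2)"
  unfolding power2_norm_eq_inner using onf_sum_inner_sum[OF assms, of c c] by (simp add: power2_eq_square)

lemma onf_bessel:
  assumes "onf v I" "finite I"
  shows "(\<Sum>i\<in>I. (v i \<bullet> x)\<^sup>2) \<le> (norm x)\<^sup>2"
proof -
  define p where "p = (\<Sum>i\<in>I. (v i \<bullet> x) *\<^sub>R v i)"
  define S where "S = (\<Sum>i\<in>I. (v i \<bullet> x)\<^sup>2)"
  have pp: "p \<bullet> p = S"
    unfolding p_def S_def using onf_sum_inner_sum[OF assms] by (simp add: power2_eq_square)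
  have xp: "x \<bullet> p = S"
    unfolding p_def S_def by (simp add: inner_sum_right power2_eq_square inner_commute)
  have "0 \<le> (x - p) \<bullet> (x - p)" by simp
  also have "\<dots> = x \<bullet> x - 2 * (x \<bullet> p) + p \<bullet> p"
    by (simp add: inner_diff_left inner_diff_right inner_commute)
  finally show ?thesis using pp xp by (simp add: power2_norm_eq_inner S_def)
qed

lemma onf_span_repr:
  assumes "onf v I" "finite I" "x \<in> span (v ` I)"
  shows "x = (\<Sum>i\<in>I. (v i \<bullet> x) *\<^sub>R v i)"
proof -
  define y where "y = x - (\<Sum>i\<in>I. (v i \<bullet> x) *\<^sub>R v i)"
  have ys: "y \<in> span (v ` I)"
    unfolding y_def using assms(3)
    by (intro span_diff span_sum span_scale) (auto intro: span_base)
  have "orthogonal y z" if zI: "z \<in> v ` I" for z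
  proof -
    obtain j where j: "j \<in> I" "z = v j" using zI by auto
    have "z \<bullet> y = 0"
      unfolding y_def j(2) using onf_inner_sum[OF assms(1,2) j(1), of "\<lambda>i. v i \<bullet> x"]
      by (simp add: inner_diff_right)
    then show ?thesis by (simp add: orthogonal_def inner_commute)
  qed
  then have "orthogonal y y" using orthogonal_to_span[OF ys] by blast
  then have "y = 0" by (simp add: orthogonal_def)
  then show ?thesis unfolding y_def by simp
qed

lemma onf_norm_span:
  assumes "onf v I" "finite I" "x \<in> span (v ` I)"
  shows "(norm x)\<^sup>2 = (\<Sum>i\<in>I. (v i \<bullet> x)\<^sup>2)"
  using onf_norm_sum[OF assms(1,2), of "\<lambda>i. v i \<bullet> x"] onf_span_repr[OF assms] by simp

lemma onf_inj: "onf v I \<Longrightarrow> inj_on v I"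
  unfolding onf_def inj_on_def by (metis one_neq_zero)

lemma onf_subset: "onf v I \<Longrightarrow> J \<subseteq> I \<Longrightarrow> onf v J"
  unfolding onf_def by blast

lemma onf_independent:
  fixes v :: "nat \<Rightarrow> 'a::euclidean_space"
  assumes "onf v I"
  shows "independent (v ` I)"
proof (rule pairwise_orthogonal_independent)
  show "pairwise orthogonal (v ` I)"
    using assms unfolding onf_def pairwise_def orthogonal_def by auto
  show "0 \<notin> v ` I"
    using assms unfolding onf_def by force
qed

lemma onf_set_id:
  assumes "pairwise orthogonal X" "\<forall>x\<in>X. norm x = 1"
  shows "(\<forall>x\<in>X. \<forall>y\<in>X. x \<bullet> y = (if x = y then 1 else 0))"
  using assms unfolding pairwise_def orthogonal_def
  by (auto simp: norm_eq_1)

lemma set_bessel: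
  fixes X :: "'a::real_inner set"
  assumes "finite X" "pairwise orthogonal X" "\<forall>x\<in>X. norm x = 1"
  shows "(\<Sum>x\<in>X. (x \<bullet> y)\<^sup>2) \<le> (norm y)\<^sup>2"
proof -
  define I where "I = {..<card X}"
  obtain g where g: "bij_betw g I X"
    using assms(1) unfolding I_def by (metis bij_betw_from_nat_into_finite ex_bij_betw_nat_finite)
  have "onf g I" unfolding onf_def using onf_set_id[OF assms(2,3)] g
    by (auto simp: bij_betw_def inj_on_def)
  then have "(\<Sum>i\<in>I. (g i \<bullet> y)\<^sup>2) \<le> (norm y)\<^sup>2" by (rule onf_bessel) (simp add: I_def)
  moreover have "(\<Sum>i\<in>I. (g i \<bullet> y)\<^sup>2) = (\<Sum>x\<in>X. (x \<bullet> y)\<^sup>2)"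
    using sum.reindex_bij_betw[OF g, of "\<lambda>x. (x \<bullet> y)\<^sup>2"] by simp
  ultimately show ?thesis by simp
qed



lemma maxstep:
  fixes f :: "'a::real_inner \<Rightarrow> 'b::real_inner"
  assumes lin: "linear f" and v1: "norm v = 1" and vx: "v \<bullet> x = 0"
    and mx: "\<And>t::real. norm (f (v + t *\<^sub>R x)) \<le> norm (f v) * norm (v + t *\<^sub>R x)"
  shows "f v \<bullet> f x = 0"
proof -
  define a where "a = f v \<bullet> f x"
  define c where "c = (norm (f x))\<^sup>2 - (norm (f v))\<^sup>2 * (norm x)\<^sup>2"
  have key: "2 * t * a + t\<^sup>2 * c \<le> 0" for t :: real
  proof -
    have fv: "f (v + t *\<^sub>R x) = f v + t *\<^sub>R f x"
      using lin by (simp add: linear_add linear_scale)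
    have n1: "(norm (f (v + t *\<^sub>R x)))\<^sup>2 = (norm (f v))\<^sup>2 + 2 * t * a + t\<^sup>2 * (norm (f x))\<^sup>2"
      unfolding fv power2_norm_eq_inner a_def
      by (simp add: inner_add_left inner_add_right inner_commute power2_eq_square algebra_simps)
    have n2: "(norm (v + t *\<^sub>R x))\<^sup>2 = 1 + t\<^sup>2 * (norm x)\<^sup>2"
    proof -
      have "(norm (v + t *\<^sub>R x))\<^sup>2 = v \<bullet> v + 2 * t * (v \<bullet> x) + t\<^sup>2 * (x \<bullet> x)"
        unfolding power2_norm_eq_inner
        by (simp add: inner_add_left inner_add_right inner_commute power2_eq_square algebra_simps)
      then show ?thesis using v1 vx by (simp add: power2_norm_eq_inner[symmetric])
    qed
    have "(norm (f (v + t *\<^sub>R x)))\<^sup>2 \<le> (norm (f v) * norm (v + t *\<^sub>R x))\<^sup>2"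
      using mx[of t] by (simp add: power_mono)
    then have "(norm (f v))\<^sup>2 + 2 * t * a + t\<^sup>2 * (norm (f x))\<^sup>2 \<le> (norm (f v))\<^sup>2 * (1 + t\<^sup>2 * (norm x)\<^sup>2)"
      using n1 n2 by (simp add: power_mult_distrib)
    then show ?thesis unfolding c_def by (simp add: algebra_simps)
  qed
  define d where "d = \<bar>c\<bar> + 1"
  define t where "t = a / d"
  have pos: "d > 0" unfolding d_def by simp
  have "2 * t * a + t\<^sup>2 * c = a\<^sup>2 * (2 * d + c) / d\<^sup>2"
    unfolding t_def using pos by (simp add: field_simps power2_eq_square)
  then have "2 * t * a + t\<^sup>2 * c = a\<^sup>2 * (2 * (\<bar>c\<bar> + 1) + c) / (\<bar>c\<bar> + 1)\<^sup>2"
    unfolding d_def .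
  then have "a\<^sup>2 * (2 * (\<bar>c\<bar> + 1) + c) / (\<bar>c\<bar> + 1)\<^sup>2 \<le> 0" using key[of t] by simp
  moreover have "a\<^sup>2 * (2 * (\<bar>c\<bar> + 1) + c) = (a\<^sup>2 * (2 * (\<bar>c\<bar> + 1) + c) / (\<bar>c\<bar> + 1)\<^sup>2) * (\<bar>c\<bar> + 1)\<^sup>2"
    by (simp add: abs_if)
  ultimately have "a\<^sup>2 * (2 * (\<bar>c\<bar> + 1) + c) \<le> 0"
    by (metis mult_nonpos_nonneg zero_le_power2)
  moreover have "2 * (\<bar>c\<bar> + 1) + c > 0" by (simp add: abs_if)
  ultimately have "a\<^sup>2 \<le> 0" by (simp add: mult_le_0_iff)
  then show ?thesis unfolding a_def by simp
qed



definition good :: "('a::euclidean_space \<Rightarrow> 'b::euclidean_space) \<Rightarrow> (nat \<Rightarrow> 'a) \<Rightarrow> nat \<Rightarrow> bool" where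
  "good f v i \<longleftrightarrow> norm (v i) = 1 \<and> (\<forall>j\<in>{1..<i}. v j \<bullet> v i = 0) \<and>
     (\<forall>x. (\<forall>j\<in>{1..<i}. v j \<bullet> x = 0) \<longrightarrow> norm (f x) \<le> norm (f (v i)) * norm x)"

lemma good_cong: "(\<And>j. j \<le> i \<Longrightarrow> v' j = v j) \<Longrightarrow> good f v' i = good f v i"
  unfolding good_def by auto

lemma greedy:
  fixes f :: "'a::euclidean_space \<Rightarrow> 'b::euclidean_space"
  assumes lin: "linear f"
  shows "d \<le> DIM('a) \<Longrightarrow> \<exists>v. \<forall>i\<in>{1..d}. good f v i"
proof (induction d)
  case 0
  then show ?case by simp
next
  case (Suc d)
  then obtain v where v: "\<forall>i\<in>{1..d}. good f v i" by auto
  define S where "S = {x. \<forall>j\<in>{1..d}. v j \<bullet> x = 0}"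
  have subS: "subspace S"
    unfolding S_def subspace_def by (auto simp: inner_add_right)
  have "dim (v ` {1..d}) \<le> card (v ` {1..d})" by (rule dim_le_card') simp
  also have "\<dots> \<le> d" using card_image_le[of "{1..d}" v] by simp
  also have "\<dots> < DIM('a)" using Suc.prems by simp
  finally obtain z where z: "z \<noteq> 0" "\<And>y. y \<in> span (v ` {1..d}) \<Longrightarrow> orthogonal z y"
    using orthogonal_to_subspace_exists by blast
  have zS: "z \<in> S" unfolding S_def
  proof (intro CollectI ballI)
    fix j assume "j \<in> {1..d}"
    then have "v j \<in> span (v ` {1..d})" by (intro span_base) auto
    then show "v j \<bullet> z = 0" using z(2) by (metis orthogonal_def inner_commute)
  qed
  define K where "K = S \<inter> sphere 0 1"
  have cK: "compact K" unfolding K_def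
    using closed_subspace[OF subS] by (simp add: closed_Int_compact)
  have "z /\<^sub>R norm z \<in> K" unfolding K_def using zS z(1) subS
    by (simp add: subspace_scale)
  then have neK: "K \<noteq> {}" by auto
  have blin: "bounded_linear f" using lin by (simp add: linear_conv_bounded_linear)
  have "continuous_on K (\<lambda>x. norm (f x))"
    by (intro continuous_on_norm linear_continuous_on blin)
  then obtain y where y: "y \<in> K" "\<And>x. x \<in> K \<Longrightarrow> norm (f x) \<le> norm (f y)"
    using continuous_attains_sup[OF cK neK] by blast
  have ymax: "norm (f x) \<le> norm (f y) * norm x" if "x \<in> S" for x
  proof (cases "x = 0")
    case True then show ?thesis using lin by (simp add: linear_0)
  next
    case False
    then have "x /\<^sub>R norm x \<in> K" unfolding K_def using that subS by (simp add: subspace_scale)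
    then have "norm (f (x /\<^sub>R norm x)) \<le> norm (f y)" by (rule y(2))
    then have "norm (f x) / norm x \<le> norm (f y)"
      using lin by (simp add: linear_scale divide_inverse mult.commute)
    then show ?thesis using False by (simp add: divide_le_eq mult.commute)
  qed
  define v' where "v' = v(Suc d := y)"
  have "good f v' i" if i: "i \<in> {1..Suc d}" for i
  proof (cases "i = Suc d")
    case False
    then have "i \<in> {1..d}" using i by auto
    moreover have "good f v' i = good f v i"
      by (rule good_cong) (use \<open>i \<in> {1..d}\<close> in \<open>auto simp: v'_def\<close>)
    ultimately show ?thesis using v by auto
  next
    case True
    have e: "\<And>j. j \<in> {1..<i} \<Longrightarrow> v' j = v j" using True by (auto simp: v'_def)
    have yS: "y \<in> S" "norm y = 1" using y(1) unfolding K_def by auto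
    show ?thesis unfolding good_def
    proof (intro conjI allI impI ballI)
      show "norm (v' i) = 1" using True yS by (simp add: v'_def)
      show "v' j \<bullet> v' i = 0" if "j \<in> {1..<i}" for j
        using that True yS(1) e[OF that] by (auto simp: v'_def S_def)
      show "norm (f x) \<le> norm (f (v' i)) * norm x" if "\<forall>j\<in>{1..<i}. v' j \<bullet> x = 0" for x
      proof -
        have "x \<in> S" unfolding S_def using that e True by auto
        then show ?thesis using ymax True by (simp add: v'_def)
      qed
    qed
  qed
  then show ?case by blast
qed

lemma good_onf:
  assumes "\<forall>i\<in>{1..n}. good f v i"
  shows "onf v {1..n}"
  unfolding onf_def
proof (intro ballI)
  fix i j assume ij: "i \<in> {1..n}" "j \<in> {1..n}"
  show "v i \<bullet> v j = (if i = j then 1 else 0)"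
  proof (cases i j rule: linorder_cases)
    case less then show ?thesis using assms ij by (auto simp: good_def)
  next
    case equal then show ?thesis using assms ij by (auto simp: good_def norm_eq_1)
  next
    case greater then show ?thesis using assms ij by (auto simp: good_def inner_commute)
  qed
qed

lemma good_mono:
  assumes "\<forall>i\<in>{1..n}. good f v i" "1 \<le> i" "i \<le> j" "j \<le> n"
  shows "norm (f (v j)) \<le> norm (f (v i))"
proof (cases "i = j")
  case True then show ?thesis by simp
next
  case False
  have gi: "good f v i" and gj: "good f v j" using assms by auto
  have "\<forall>l\<in>{1..<i}. v l \<bullet> v j = 0" using gj False assms(3) by (auto simp: good_def)
  then have "norm (f (v j)) \<le> norm (f (v i)) * norm (v j)" using gi by (auto simp: good_def)
  then show ?thesis using gj by (simp add: good_def)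
qed

lemma good_orth:
  assumes lin: "linear f" and "\<forall>i\<in>{1..n}. good f v i" "1 \<le> i" "i < j" "j \<le> n"
  shows "f (v i) \<bullet> f (v j) = 0"
proof (rule maxstep[OF lin])
  have gi: "good f v i" and gj: "good f v j" using assms by auto
  show "norm (v i) = 1" using gi by (simp add: good_def)
  show "v i \<bullet> v j = 0" using gj assms by (simp add: good_def)
  fix t :: real
  have "\<forall>l\<in>{1..<i}. v l \<bullet> (v i + t *\<^sub>R v j) = 0"
    using gi gj assms(4) by (auto simp: good_def inner_add_right)
  then show "norm (f (v i + t *\<^sub>R v j)) \<le> norm (f (v i)) * norm (v i + t *\<^sub>R v j)"
    using gi by (simp add: good_def)
qed



lemma extend_onf:
  fixes u :: "nat \<Rightarrow> 'a::euclidean_space"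
  assumes "finite J"
  shows "J \<inter> I = {} \<Longrightarrow> finite I \<Longrightarrow> card (I \<union> J) \<le> DIM('a) \<Longrightarrow> onf u I \<Longrightarrow>
     \<exists>u'. onf u' (I \<union> J) \<and> (\<forall>i\<in>I. u' i = u i)"
  using assms
proof (induction J rule: finite_induct)
  case empty
  then show ?case by auto
next
  case (insert a J)
  have fin: "finite (I \<union> J)" using insert by auto
  have "card (I \<union> insert a J) = Suc (card (I \<union> J))"
    using insert fin by (simp add: card_insert_if)
  then have lt: "card (I \<union> J) < DIM('a)" using insert.prems by simp
  obtain u' where u': "onf u' (I \<union> J)" "\<forall>i\<in>I. u' i = u i"
    using insert lt by auto
  have "dim (u' ` (I \<union> J)) \<le> card (u' ` (I \<union> J))" by (rule dim_le_card') (use fin in simp)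
  also have "\<dots> \<le> card (I \<union> J)" using card_image_le[OF fin] by simp
  finally have "dim (u' ` (I \<union> J)) < DIM('a)" using lt by simp
  then obtain z where z: "z \<noteq> 0" "\<And>y. y \<in> span (u' ` (I \<union> J)) \<Longrightarrow> orthogonal z y"
    using orthogonal_to_subspace_exists by blast
  define y where "y = z /\<^sub>R norm z"
  have "norm y = 1" using z(1) unfolding y_def by simp
  then have y1: "y \<bullet> y = 1" by (simp add: norm_eq_1)
  have yo: "y \<bullet> u' i = 0" if "i \<in> I \<union> J" for i
  proof -
    have "u' i \<in> span (u' ` (I \<union> J))" using that by (intro span_base) auto
    then have "z \<bullet> u' i = 0" using z(2) by (simp add: orthogonal_def)
    then show ?thesis unfolding y_def by simp
  qed
  have aI: "a \<notin> I \<union> J" using insert by auto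
  define u'' where "u'' = u'(a := y)"
  have "onf u'' (I \<union> insert a J)"
    unfolding onf_def
  proof (intro ballI)
    fix i j assume ij: "i \<in> I \<union> insert a J" "j \<in> I \<union> insert a J"
    show "u'' i \<bullet> u'' j = (if i = j then 1 else 0)"
    proof (cases "i = a"; cases "j = a")
      assume "i = a" "j = a" then show ?thesis using y1 by (simp add: u''_def)
    next
      assume "i = a" "j \<noteq> a" then show ?thesis using yo ij by (simp add: u''_def)
    next
      assume "i \<noteq> a" "j = a" then show ?thesis using yo ij by (simp add: u''_def inner_commute)
    next
      assume "i \<noteq> a" "j \<noteq> a" then show ?thesis using u'(1) ij by (simp add: u''_def onf_def)
    qed
  qed
  moreover have "\<forall>i\<in>I. u'' i = u i" using u'(2) aI by (auto simp: u''_def)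
  ultimately show ?case by blast
qed

lemma mat_eq_by_mult:
  fixes A B :: "real^'m^'k"
  assumes "\<And>x. A *v x = B *v x"
  shows "A = B"
proof -
  have "A $ a $ b = B $ a $ b" for a b
  proof -
    have "A $ a $ b = (A *v axis b 1) $ a" by (simp add: matrix_vector_mult_basis column_def)
    also have "\<dots> = (B *v axis b 1) $ a" using assms by simp
    also have "\<dots> = B $ a $ b" by (simp add: matrix_vector_mult_basis column_def)
    finally show ?thesis .
  qed
  then show ?thesis by (simp add: vec_eq_iff)
qed

lemma outer_sum_apply:
  fixes u :: "nat \<Rightarrow> real^'k" and v :: "nat \<Rightarrow> real^'m"
  shows "(\<Sum>i\<in>I. s i *\<^sub>R outer_prod (u i) (v i)) *v x = (\<Sum>i\<in>I. (s i * (v i \<bullet> x)) *\<^sub>R u i)"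
proof -
  have "((\<Sum>i\<in>I. s i *\<^sub>R outer_prod (u i) (v i)) *v x) $ a = (\<Sum>i\<in>I. (s i * (v i \<bullet> x)) *\<^sub>R u i) $ a" for a
  proof -
    have "((\<Sum>i\<in>I. s i *\<^sub>R outer_prod (u i) (v i)) *v x) $ a = (\<Sum>b\<in>UNIV. (\<Sum>i\<in>I. s i * (u i $ a * v i $ b)) * x $ b)"
      by (simp add: matrix_vector_mult_def sum_component outer_prod_def)
    also have "\<dots> = (\<Sum>i\<in>I. (\<Sum>b\<in>UNIV. s i * (u i $ a * v i $ b) * x $ b))"
      by (simp add: sum_distrib_right sum.swap[of _ UNIV I])
    also have "\<dots> = (\<Sum>i\<in>I. (s i * (\<Sum>b\<in>UNIV. v i $ b * x $ b)) * u i $ a)"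
      by (intro sum.cong refl) (simp add: sum_distrib_left sum_distrib_right algebra_simps)
    also have "\<dots> = (\<Sum>i\<in>I. (s i * (v i \<bullet> x)) *\<^sub>R u i) $ a"
      by (simp add: sum_component inner_vec_def)
    finally show ?thesis .
  qed
  then show ?thesis by (simp add: vec_eq_iff)
qed



lemma svd_exists:
  fixes B :: "real^'m^'k"
  shows "\<exists>s u v. is_svd B s u v"
proof -
  define f where "f = (\<lambda>x. B *v x)"
  have lin: "linear f" unfolding f_def by (rule matrix_vector_mul_linear)
  define n where "n = CARD('m)"
  define k where "k = CARD('k)"
  define p where "p = min k n"
  obtain v where v: "\<forall>i\<in>{1..n}. good f v i"
    using greedy[OF lin, of n] unfolding n_def by auto
  have von: "onf v {1..n}" by (rule good_onf[OF v])
  have zero: "f (v i) = 0" if i: "i \<in> {1..n}" "k < i" for i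
  proof (rule ccontr)
    assume nz: "f (v i) \<noteq> 0"
    have nzj: "f (v j) \<noteq> 0" if j: "j \<in> {1..i}" for j
    proof -
      have "norm (f (v i)) \<le> norm (f (v j))"
        by (rule good_mono[OF v]) (use j i(1) in simp_all)
      then show ?thesis using nz by auto
    qed
    have orth: "f (v j) \<bullet> f (v l) = 0" if "j \<in> {1..i}" "l \<in> {1..i}" "j \<noteq> l" for j l
    proof (cases "j < l")
      case True show ?thesis by (rule good_orth[OF lin v]) (use True that i(1) in simp_all)
    next
      case False
      then have "l < j" using that(3) by simp
      have "f (v l) \<bullet> f (v j) = 0" by (rule good_orth[OF lin v]) (use \<open>l < j\<close> that i(1) in simp_all)
      then show ?thesis by (simp add: inner_commute)
    qed
    have inj: "inj_on (\<lambda>j. f (v j)) {1..i}"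
    proof (rule inj_onI)
      fix j l assume jl: "j \<in> {1..i}" "l \<in> {1..i}" "f (v j) = f (v l)"
      show "j = l"
      proof (rule ccontr)
        assume "j \<noteq> l"
        then have "f (v j) \<bullet> f (v j) = 0" using orth[OF jl(1,2)] jl(3) by simp
        then show False using nzj[OF jl(1)] by simp
      qed
    qed
    define T where "T = (\<lambda>j. f (v j)) ` {1..i}"
    have "independent T"
    proof (rule pairwise_orthogonal_independent)
      show "pairwise orthogonal T" unfolding T_def pairwise_def
      proof (intro ballI impI)
        fix a b assume a: "a \<in> (\<lambda>j. f (v j)) ` {1..i}" and b: "b \<in> (\<lambda>j. f (v j)) ` {1..i}" and ab: "a \<noteq> b"
        obtain j where j: "j \<in> {1..i}" "a = f (v j)" using a by blast
        obtain l where l: "l \<in> {1..i}" "b = f (v l)" using b by blast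
        have "j \<noteq> l" using ab j l by blast
        then show "orthogonal a b" unfolding orthogonal_def j(2) l(2) by (rule orth[OF j(1) l(1)])
      qed
      show "0 \<notin> T" unfolding T_def using nzj by auto
    qed
    then have "card T \<le> DIM(real^'k)" by (rule independent_bound[THEN conjunct2])
    moreover have "card T = i" unfolding T_def using card_image[OF inj] by simp
    ultimately show False using i unfolding k_def by simp
  qed
  define I0 where "I0 = {i\<in>{1..p}. f (v i) \<noteq> 0}"
  define u0 where "u0 = (\<lambda>i. f (v i) /\<^sub>R norm (f (v i)))"
  have u0on: "onf u0 I0" unfolding onf_def
  proof (intro ballI)
    fix i j assume ij: "i \<in> I0" "j \<in> I0"
    show "u0 i \<bullet> u0 j = (if i = j then 1 else 0)"
    proof (cases "i = j")
      case True
      have "norm (u0 i) = 1" using ij unfolding u0_def I0_def by simp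
      then show ?thesis using True by (simp add: norm_eq_1)
    next
      case False
      have "f (v i) \<bullet> f (v j) = 0"
      proof (cases "i < j")
        case True then show ?thesis using good_orth[OF lin v, of i j] ij by (auto simp: I0_def p_def)
      next
        case False then show ?thesis using good_orth[OF lin v, of j i] ij \<open>i \<noteq> j\<close>
          by (auto simp: I0_def p_def inner_commute)
      qed
      then show ?thesis using False unfolding u0_def by simp
    qed
  qed
  have "I0 \<union> ({1..p} - I0) = {1..p}" unfolding I0_def by auto
  moreover have "card {1..p} \<le> DIM(real^'k)" unfolding p_def k_def by simp
  ultimately obtain u where u: "onf u {1..p}" "\<forall>i\<in>I0. u i = u0 i"
    using extend_onf[of "{1..p} - I0" I0 u0] u0on by (auto simp: I0_def)
  define s where "s = (\<lambda>i. if i \<in> {1..p} then norm (f (v i)) else 0)"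
  have sum_eq: "B = (\<Sum>i=1..p. s i *\<^sub>R outer_prod (u i) (v i))"
  proof (rule mat_eq_by_mult)
    fix x :: "real^'m"
    have "independent (v ` {1..n})" by (rule onf_independent[OF von])
    moreover have "card (v ` {1..n}) = n" using card_image[OF onf_inj[OF von]] by simp
    ultimately have "dim (v ` {1..n}) = DIM(real^'m)"
      by (simp add: dim_eq_card_independent n_def)
    then have "span (v ` {1..n}) = UNIV" by (rule dim_eq_full[THEN iffD1])
    then have xr: "x = (\<Sum>i\<in>{1..n}. (v i \<bullet> x) *\<^sub>R v i)"
      using onf_span_repr[OF von] by simp
    have "B *v x = (\<Sum>i\<in>{1..n}. (v i \<bullet> x) *\<^sub>R f (v i))"
      by (subst xr) (simp add: f_def vec.sum matrix_vector_mult_scaleR)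
    also have "\<dots> = (\<Sum>i\<in>{1..p}. (v i \<bullet> x) *\<^sub>R f (v i))"
    proof (rule sum.mono_neutral_right)
      show "{1..p} \<subseteq> {1..n}" unfolding p_def by auto
      show "\<forall>i\<in>{1..n} - {1..p}. (v i \<bullet> x) *\<^sub>R f (v i) = 0"
        using zero unfolding p_def by auto
    qed simp
    also have "\<dots> = (\<Sum>i\<in>{1..p}. (s i * (v i \<bullet> x)) *\<^sub>R u i)"
    proof (rule sum.cong[OF refl])
      fix i assume i: "i \<in> {1..p}"
      show "(v i \<bullet> x) *\<^sub>R f (v i) = (s i * (v i \<bullet> x)) *\<^sub>R u i"
      proof (cases "f (v i) = 0")
        case True then show ?thesis using i by (simp add: s_def)
        next
        case False
        then have "i \<in> I0" using i by (simp add: I0_def)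
        then show ?thesis using u(2) False i by (simp add: s_def u0_def)
      qed
    qed
    also have "\<dots> = (\<Sum>i=1..p. s i *\<^sub>R outer_prod (u i) (v i)) *v x"
      by (simp add: outer_sum_apply)
    finally show "B *v x = (\<Sum>i=1..p. s i *\<^sub>R outer_prod (u i) (v i)) *v x" .
  qed
  have "is_svd B s u v"
    unfolding is_svd_def Let_def
  proof (fold k_def n_def, fold p_def, intro conjI allI impI ballI)
    show "\<And>i. i < 1 \<or> p < i \<Longrightarrow> s i = 0" by (auto simp: s_def)
    show "\<And>i. i \<in> {1..p} \<Longrightarrow> 0 \<le> s i" by (simp add: s_def)
    show "s j \<le> s i" if "1 \<le> i" "i \<le> j" "j \<le> p" for i j
      using good_mono[OF v, of i j] that by (simp add: s_def p_def)
    show "u i \<bullet> u j = (if i = j then 1 else 0)" if "i \<in> {1..p}" "j \<in> {1..p}" for i j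
      using u(1) that by (simp add: onf_def)
    show "v i \<bullet> v j = (if i = j then 1 else 0)" if "i \<in> {1..p}" "j \<in> {1..p}" for i j
      using von that by (auto simp: onf_def p_def)
    show "B = (\<Sum>i=1..p. s i *\<^sub>R outer_prod (u i) (v i))" by (rule sum_eq)
  qed
  then show ?thesis by blast
qed



lemma svd_props:
  fixes A :: "real^'m^'k"
  assumes "is_svd A s u v"
  defines "p \<equiv> min CARD('k) CARD('m)"
  shows "onf u {1..p}" "onf v {1..p}" "\<And>i. i \<in> {1..p} \<Longrightarrow> 0 \<le> s i"
    "\<And>i j. 1 \<le> i \<Longrightarrow> i \<le> j \<Longrightarrow> j \<le> p \<Longrightarrow> s j \<le> s i"
    "A *v x = (\<Sum>i=1..p. (s i * (v i \<bullet> x)) *\<^sub>R u i)"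
    "(norm (A *v x))\<^sup>2 = (\<Sum>i=1..p. (s i * (v i \<bullet> x))\<^sup>2)"
proof -
  note d = assms(1)[unfolded is_svd_def Let_def, folded p_def]
  show u: "onf u {1..p}" using d by (simp add: onf_def)
  show "onf v {1..p}" using d by (simp add: onf_def)
  show "\<And>i. i \<in> {1..p} \<Longrightarrow> 0 \<le> s i" using d by blast
  show "\<And>i j. 1 \<le> i \<Longrightarrow> i \<le> j \<Longrightarrow> j \<le> p \<Longrightarrow> s j \<le> s i" using d by blast
  have "A = (\<Sum>i=1..p. s i *\<^sub>R outer_prod (u i) (v i))" using d by blast
  then show ax: "A *v x = (\<Sum>i=1..p. (s i * (v i \<bullet> x)) *\<^sub>R u i)"
    by (simp add: outer_sum_apply)
  show "(norm (A *v x))\<^sup>2 = (\<Sum>i=1..p. (s i * (v i \<bullet> x))\<^sup>2)"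
    unfolding ax by (rule onf_norm_sum[OF u]) simp
qed

lemma B_bound:
  fixes B :: "real^'m^'k"
  assumes svd: "is_svd B s u v" and r: "r + 1 \<le> min CARD('k) CARD('m)"
    and sb: "s (r + 1) \<le> \<beta>" and b0: "0 \<le> \<beta>"
    and xo: "\<forall>j\<in>{1..r}. v j \<bullet> x = 0"
  shows "norm (B *v x) \<le> \<beta> * norm x"
proof -
  define p where "p = min CARD('k) CARD('m)"
  note P = svd_props[OF svd, folded p_def]
  have "(norm (B *v x))\<^sup>2 = (\<Sum>i=1..p. (s i * (v i \<bullet> x))\<^sup>2)" by (rule P(6))
  also have "\<dots> \<le> (\<Sum>i=1..p. \<beta>\<^sup>2 * (v i \<bullet> x)\<^sup>2)"
  proof (rule sum_mono)
    fix i assume i: "i \<in> {1..p}"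
    show "(s i * (v i \<bullet> x))\<^sup>2 \<le> \<beta>\<^sup>2 * (v i \<bullet> x)\<^sup>2"
    proof (cases "i \<le> r")
      case True then show ?thesis using xo i by simp
    next
      case False
      then have "s i \<le> s (r + 1)" using P(4)[of "r+1" i] i by simp
      then have "s i \<le> \<beta>" using sb by simp
      moreover have "0 \<le> s i" using P(3) i by simp
      ultimately have "(s i)\<^sup>2 \<le> \<beta>\<^sup>2" by (simp add: power_mono)
      then show ?thesis unfolding power_mult_distrib by (rule mult_right_mono) simp
    qed
  qed
  also have "\<dots> = \<beta>\<^sup>2 * (\<Sum>i=1..p. (v i \<bullet> x)\<^sup>2)" by (simp add: sum_distrib_left)
  also have "\<dots> \<le> \<beta>\<^sup>2 * (norm x)\<^sup>2"
    by (rule mult_left_mono[OF onf_bessel[OF P(2)]]) simp_all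
  also have "\<dots> = (\<beta> * norm x)\<^sup>2" by (simp add: power_mult_distrib)
  finally have "(norm (B *v x))\<^sup>2 \<le> (\<beta> * norm x)\<^sup>2" .
  then show ?thesis by (rule power2_le_imp_le) (use b0 in simp)
qed

lemma A_bound:
  fixes A :: "real^'m^'k"
  assumes svd: "is_svd A s u v" and q: "1 \<le> q" "q \<le> min CARD('k) CARD('m)"
    and x: "x \<in> span (v ` {1..q})"
  shows "s q * norm x \<le> norm (A *v x)"
proof -
  define p where "p = min CARD('k) CARD('m)"
  note P = svd_props[OF svd, folded p_def]
  have vq: "onf v {1..q}" using onf_subset[OF P(2)] q by (auto simp: p_def)
  have sq: "0 \<le> s q" using P(3) q by (simp add: p_def)
  have "(s q * norm x)\<^sup>2 = (\<Sum>i=1..q. (s q)\<^sup>2 * (v i \<bullet> x)\<^sup>2)"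
    using onf_norm_span[OF vq _ x] by (simp add: power_mult_distrib sum_distrib_left)
  also have "\<dots> \<le> (\<Sum>i=1..q. (s i * (v i \<bullet> x))\<^sup>2)"
  proof (rule sum_mono)
    fix i assume i: "i \<in> {1..q}"
    have "s q \<le> s i" using P(4)[of i q] i q by (simp add: p_def)
    then have "(s q)\<^sup>2 \<le> (s i)\<^sup>2" using sq by (simp add: power_mono)
    then show "(s q)\<^sup>2 * (v i \<bullet> x)\<^sup>2 \<le> (s i * (v i \<bullet> x))\<^sup>2"
      unfolding power_mult_distrib by (rule mult_right_mono) simp
  qed
  also have "\<dots> \<le> (\<Sum>i=1..p. (s i * (v i \<bullet> x))\<^sup>2)"
    by (rule sum_mono2) (use q in \<open>auto simp: p_def\<close>)
  also have "\<dots> = (norm (A *v x))\<^sup>2" using P(6) by simp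
  finally have "(s q * norm x)\<^sup>2 \<le> (norm (A *v x))\<^sup>2" .
  then show ?thesis by (rule power2_le_imp_le) simp
qed

lemma mv_component: "(C *v y) $ a = (C $ a) \<bullet> y"
  by (simp add: matrix_vector_mult_def inner_vec_def)

lemma norm_sq_components: "(norm (y::real^'n))\<^sup>2 = (\<Sum>a\<in>UNIV. (y $ a)\<^sup>2)"
  unfolding power2_norm_eq_inner by (simp add: inner_vec_def power2_eq_square)

lemma C_bound:
  fixes C :: "real^'m^'k" and v :: "nat \<Rightarrow> real^'m"
  assumes von: "onf v I" and fI: "finite I" and fX: "finite X"
    and po: "pairwise orthogonal X" and n1: "\<forall>x\<in>X. norm x = 1"
    and XW: "X \<subseteq> span (v ` I)"
  shows "(\<Sum>x\<in>X. (norm (C *v x))\<^sup>2) \<le> (\<Sum>i\<in>I. (norm (C *v v i))\<^sup>2)"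
proof -
  define P where "P = (\<lambda>a. \<Sum>i\<in>I. (v i \<bullet> C $ a) *\<^sub>R v i)"
  have key: "C $ a \<bullet> x = x \<bullet> P a" if "x \<in> X" for x a
  proof -
    have xr: "x = (\<Sum>i\<in>I. (v i \<bullet> x) *\<^sub>R v i)" using onf_span_repr[OF von fI] XW that by auto
    have "C $ a \<bullet> x = (\<Sum>i\<in>I. (v i \<bullet> x) * (C $ a \<bullet> v i))"
      by (subst xr) (simp add: inner_sum_right)
    also have "\<dots> = x \<bullet> P a"
      unfolding P_def by (simp add: inner_sum_right inner_commute mult.commute)
    finally show ?thesis .
  qed
  have "(\<Sum>x\<in>X. (norm (C *v x))\<^sup>2) = (\<Sum>x\<in>X. \<Sum>a\<in>UNIV. (x \<bullet> P a)\<^sup>2)"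
    by (intro sum.cong refl) (simp add: norm_sq_components mv_component key)
  also have "\<dots> = (\<Sum>a\<in>UNIV. \<Sum>x\<in>X. (x \<bullet> P a)\<^sup>2)" by (rule sum.swap)
  also have "\<dots> \<le> (\<Sum>a\<in>UNIV. (norm (P a))\<^sup>2)"
    by (intro sum_mono set_bessel fX po n1)
  also have "\<dots> = (\<Sum>a\<in>UNIV. \<Sum>i\<in>I. (v i \<bullet> C $ a)\<^sup>2)"
    unfolding P_def by (intro sum.cong refl onf_norm_sum von fI)
  also have "\<dots> = (\<Sum>i\<in>I. \<Sum>a\<in>UNIV. (v i \<bullet> C $ a)\<^sup>2)" by (rule sum.swap)
  also have "\<dots> = (\<Sum>i\<in>I. (norm (C *v v i))\<^sup>2)"
    by (intro sum.cong refl) (simp add: norm_sq_components mv_component inner_commute)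
  finally show ?thesis .
qed



lemma find_X:
  fixes v w :: "nat \<Rightarrow> 'a::euclidean_space"
  assumes von: "onf v {1..q}" and rq: "r + r \<le> q"
  shows "\<exists>X. finite X \<and> card X = r \<and> pairwise orthogonal X \<and> (\<forall>x\<in>X. norm x = 1) \<and>
     X \<subseteq> span (v ` {1..q}) \<and> (\<forall>x\<in>X. \<forall>j\<in>{1..r}. w j \<bullet> x = 0)"
proof -
  define W where "W = span (v ` {1..q})"
  have sW: "subspace W" unfolding W_def by simp
  have dW: "dim W = q" unfolding W_def
    using dim_span_eq_card_independent[OF onf_independent[OF von]] card_image[OF onf_inj[OF von]]
    by simp
  define P where "P = (\<lambda>z. \<Sum>i\<in>{1..q}. (v i \<bullet> z) *\<^sub>R v i)"
  have PW: "P z \<in> W" for z unfolding P_def W_def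
    by (intro span_sum span_scale) (auto intro: span_base)
  have Pinner: "P z \<bullet> y = z \<bullet> y" if "y \<in> W" for y z
  proof -
    have yr: "y = (\<Sum>i\<in>{1..q}. (v i \<bullet> y) *\<^sub>R v i)" using onf_span_repr[OF von _ that[unfolded W_def]] by simp
    have "P z \<bullet> y = (\<Sum>i\<in>{1..q}. (v i \<bullet> z) * (v i \<bullet> y))"
      unfolding P_def by (simp add: inner_sum_left)
    also have "\<dots> = z \<bullet> y"
      by (subst (2) yr) (simp add: inner_sum_right inner_commute mult.commute)
    finally show ?thesis .
  qed
  define Z where "Z = P ` w ` {1..r}"
  define A' where "A' = span Z"
  have sA: "subspace A'" unfolding A'_def by simp
  have AW: "A' \<subseteq> W" unfolding A'_def
    by (rule span_minimal) (use PW sW in \<open>auto simp: Z_def\<close>)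
  define U where "U = {y \<in> W. \<forall>x \<in> A'. orthogonal x y}"
  have dU: "dim U + dim A' = dim W" unfolding U_def
    by (rule dim_subspace_orthogonal_to_vectors[OF sA sW AW])
  have "dim A' \<le> card Z" unfolding A'_def dim_span by (rule dim_le_card') (simp add: Z_def)
  also have "card Z \<le> r" unfolding Z_def
    by (metis card_atLeastAtMost card_image_le diff_Suc_1 finite_atLeastAtMost finite_imageI image_image)
  finally have dU': "r \<le> dim U" using dU dW rq by simp
  have sU: "subspace U" unfolding U_def subspace_def orthogonal_def
    using sW by (auto simp: subspace_def inner_add_right)
  obtain Bs where Bs: "Bs \<subseteq> U" "pairwise orthogonal Bs" "\<And>x. x \<in> Bs \<Longrightarrow> norm x = 1"
    "independent Bs" "card Bs = dim U"
    using orthonormal_basis_subspace[OF sU] by metis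
  obtain X where X: "X \<subseteq> Bs" "card X = r" "finite X"
    using obtain_subset_with_card_n[of r Bs] dU' Bs(5) by metis
  have "\<forall>x\<in>X. \<forall>j\<in>{1..r}. w j \<bullet> x = 0"
  proof (intro ballI)
    fix x j assume x: "x \<in> X" and j: "j \<in> {1..r}"
    have xU: "x \<in> U" using x X(1) Bs(1) by auto
    have "P (w j) \<in> A'" unfolding A'_def Z_def using j by (intro span_base) auto
    then have "P (w j) \<bullet> x = 0" using xU by (simp add: U_def orthogonal_def)
    then show "w j \<bullet> x = 0" using Pinner xU by (simp add: U_def)
  qed
  moreover have "X \<subseteq> span (v ` {1..q})" using X(1) Bs(1) by (auto simp: U_def W_def)
  moreover have "pairwise orthogonal X" using pairwise_subset[OF Bs(2) X(1)] .
  ultimately show ?thesis using X Bs(3) by blast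
qed

theorem lemma10:
  fixes A B C :: "real^'m^'k" and r :: nat and \<beta> :: real
    and u :: "nat \<Rightarrow> real^'k" and v :: "nat \<Rightarrow> real^'m"
  assumes "A = B + C"
    and "0 < r" and "2 * r \<le> min CARD('k) CARD('m)"
    and "is_svd A (sigma A) u v"
    and "0 \<le> \<beta>"
    and "sigma B (r + 1) \<le> \<beta>"
    and "\<forall>i\<in>{1..2 * r}. norm (C *v v i) \<le> 2 * \<beta>"
  shows "sigma A (2 * r) \<le> 4 * \<beta>"
proof -
  define s where "s = sigma A (2 * r)"
  have "\<exists>u v. is_svd B (sigma B) u v"
    unfolding sigma_def by (rule someI_ex[where P="\<lambda>s. \<exists>u v. is_svd B s u v", OF svd_exists])
  then obtain u' v' where svdB: "is_svd B (sigma B) u' v'" by blast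
  define p where "p = min CARD('k) CARD('m)"
  note PA = svd_props[OF assms(4), folded p_def]
  have von: "onf v {1..2*r}" using onf_subset[OF PA(2)] assms(3) by (auto simp: p_def)
  obtain X where X: "finite X" "card X = r" "pairwise orthogonal X" "\<forall>x\<in>X. norm x = 1"
     "X \<subseteq> span (v ` {1..2*r})" "\<forall>x\<in>X. \<forall>j\<in>{1..r}. v' j \<bullet> x = 0"
    using find_X[OF von, of r v'] by auto
  show ?thesis
  proof (cases "s \<le> \<beta>")
    case True then show ?thesis using assms(5) by (simp add: s_def)
  next
    case False
    have each: "(s - \<beta>)\<^sup>2 \<le> (norm (C *v x))\<^sup>2" if x: "x \<in> X" for x
    proof -
      have n1: "norm x = 1" using X(4) x by simp
      have "s * norm x \<le> norm (A *v x)" unfolding s_def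
        by (rule A_bound[OF assms(4)]) (use assms(2,3) X(5) x in auto)
      also have "\<dots> \<le> norm (B *v x) + norm (C *v x)"
        unfolding assms(1) by (simp add: matrix_vector_mult_add_rdistrib norm_triangle_ineq)
      also have "norm (B *v x) \<le> \<beta> * norm x"
        by (rule B_bound[OF svdB _ assms(6,5)]) (use assms(2,3) X(6) x in auto)
      finally have "s - \<beta> \<le> norm (C *v x)" using n1 by simp
      then show ?thesis using False by (intro power_mono) auto
    qed
    have "real r * (s - \<beta>)\<^sup>2 = (\<Sum>x\<in>X. (s - \<beta>)\<^sup>2)" using X(2) by simp
    also have "\<dots> \<le> (\<Sum>x\<in>X. (norm (C *v x))\<^sup>2)" by (rule sum_mono) (rule each)
    also have "\<dots> \<le> (\<Sum>i\<in>{1..2*r}. (norm (C *v v i))\<^sup>2)"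
      by (rule C_bound[OF von _ X(1,3,4,5)]) simp
    also have "\<dots> \<le> (\<Sum>i\<in>{1..2*r}. (2 * \<beta>)\<^sup>2)"
      by (intro sum_mono power_mono) (use assms(7) in auto)
    also have "\<dots> = real r * (8 * \<beta>\<^sup>2)" by (simp add: power_mult_distrib)
    finally have "(s - \<beta>)\<^sup>2 \<le> 8 * \<beta>\<^sup>2" using assms(2) by simp
    also have "\<dots> \<le> (3 * \<beta>)\<^sup>2" by (simp add: power_mult_distrib)
    finally have "(s - \<beta>)\<^sup>2 \<le> (3 * \<beta>)\<^sup>2" .
    then have "s - \<beta> \<le> 3 * \<beta>" by (rule power2_le_imp_le) (use assms(5) in simp)
    then show ?thesis by (simp add: s_def)
  qed
qed


end
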